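(* Let $M=(m_{ij})$ be an $n\times n$ homogeneous, well-ordered integer matrix of degree $d$, and let $M'$ be the $(n-1)\times n$ matrix obtained from $M$ by erasing the first row. Assume there exists a zero-dimensional subscheme $Z\subset\mathbb{P}^2$ having a degree Hilbert-Burch matrix equal to $M'$. Then the Hilbert function of $Z$ in degree $d-1$ equals the degree of $Z$.
   Context: A matrix of integers is homogeneous if every $2\times2$ submatrix $\begin{pmatrix} a&b\\ c&e\end{pmatrix}$ satisfies $a+e=b+c$; the degree of a square homogeneous matrix is $\sum_i m_{i\sigma(i)}$, independent of $\sigma$. Well-ordered: for $i'>i$, $j'>j$, $m_{i'j}\le m_{ij}$ and $m_{ij'}\ge m_{ij}$. For a zero-dimensional subscheme $Z\subset\mathbb{P}^2$, a degree Hilbert-Burch (dHB) matrix of $Z$ is the integer matrix $(b_i-a_j)$ arising from a (not necessarily minimal) free resolution $0\to\bigoplus_{i=1}^{n-1}\mathcal{O}(-b_i)\xrightarrow{A}\bigoplus_{j=1}^{n}\mathcal{O}(-a_j)\to\mathcal{I}_Z\to0$, where $A=(f_{ij})$ has $\deg f_{ij}=b_i-a_j$, $b_1\ge\dots\ge b_{n-1}$, $a_1\ge\dots\ge a_n$. The Hilbert function of $Z$ is $Hf_Z(t)=\dim_{\mathbb{C}}(\mathbb{C}[x_0,x_1,x_2]/I_Z)_t$, $I_Z$ the homogeneous ideal of $Z$. *)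

theory Defs
  imports Complex_Main "HOL-Library.Poly_Mapping" "HOL-Library.Product_Plus"
begin

text \<open>The homogeneous coordinate ring S = C[x0,x1,x2]: a monomial x0^a x1^b x2^c is the
  exponent triple (a,b,c); a polynomial is a finitely supported map from exponents to C.\<close>

type_synonym mono3 = "nat \<times> nat \<times> nat"
type_synonym poly3 = "mono3 \<Rightarrow>\<^sub>0 complex"

definition mdeg :: "mono3 \<Rightarrow> nat" where
  "mdeg m = fst m + fst (snd m) + snd (snd m)"

definition sc :: "complex \<Rightarrow> poly3 \<Rightarrow> poly3" where
  "sc c p = Poly_Mapping.single (0::mono3) c * p"

text \<open>p is homogeneous of (integer) degree d; the zero polynomial is homogeneous of every
  degree, and only 0 is homogeneous of negative degree.\<close>
definition hom :: "poly3 \<Rightarrow> int \<Rightarrow> bool" where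
  "hom p d \<longleftrightarrow> (\<forall>m\<in>Poly_Mapping.keys p. int (mdeg m) = d)"

definition var :: "nat \<Rightarrow> poly3" where
  "var i = Poly_Mapping.single (if i = 0 then (1,0,0) else if i = 1 then (0,1,0) else (0,0,1)) 1"

definition hcomp :: "poly3 \<Rightarrow> nat \<Rightarrow> poly3" where
  "hcomp p t = (\<Sum>m\<in>{m\<in>Poly_Mapping.keys p. mdeg m = t}. Poly_Mapping.single m (Poly_Mapping.lookup p m))"

definition is_ideal :: "poly3 set \<Rightarrow> bool" where
  "is_ideal I \<longleftrightarrow> 0 \<in> I \<and> (\<forall>p\<in>I. \<forall>q\<in>I. p + q \<in> I) \<and> (\<forall>p\<in>I. \<forall>r. r * p \<in> I)"

definition homogeneous_ideal :: "poly3 set \<Rightarrow> bool" where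
  "homogeneous_ideal I \<longleftrightarrow> is_ideal I \<and> (\<forall>p\<in>I. \<forall>t. hcomp p t \<in> I)"

definition saturated :: "poly3 set \<Rightarrow> bool" where
  "saturated I \<longleftrightarrow> (\<forall>f. (\<exists>k. \<forall>i<3. var i ^ k * f \<in> I) \<longrightarrow> f \<in> I)"

definition cdim :: "poly3 set \<Rightarrow> nat" where
  "cdim V = vector_space.dim sc V"

definition hilb :: "poly3 set \<Rightarrow> int \<Rightarrow> nat" where
  "hilb I t = (if t < 0 then 0 else cdim {p. hom p t} - cdim {p \<in> I. hom p t})"

text \<open>I is the homogeneous ideal I_Z of a zero-dimensional subscheme Z of P^2:
  a proper saturated homogeneous ideal whose Hilbert function is eventually constant.\<close>
definition zero_dim_ideal :: "poly3 set \<Rightarrow> bool" where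
  "zero_dim_ideal I \<longleftrightarrow> homogeneous_ideal I \<and> saturated I \<and> I \<noteq> UNIV \<and>
     (\<exists>e t0. \<forall>t\<ge>t0. hilb I t = e)"

definition scheme_degree :: "poly3 set \<Rightarrow> nat" where
  "scheme_degree I = (THE e. \<exists>t0. \<forall>t\<ge>t0. hilb I t = e)"

text \<open>N (r rows, c columns, 0-indexed) is a degree Hilbert-Burch matrix of the scheme with
  ideal I: there is a (not necessarily minimal) graded free resolution
  0 -> (+)_i S(-b_i) --A--> (+)_j S(-a_j) --g--> I -> 0 with A = (f i j),
  deg f i j = b i - a j, deg g j = a j, b and a non-increasing, and N i j = b i - a j.\<close>
definition dHB :: "poly3 set \<Rightarrow> (nat \<Rightarrow> nat \<Rightarrow> int) \<Rightarrow> nat \<Rightarrow> nat \<Rightarrow> bool" where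
  "dHB I N r c \<longleftrightarrow> (\<exists>(a::nat \<Rightarrow> int) (b::nat \<Rightarrow> int) (f::nat \<Rightarrow> nat \<Rightarrow> poly3) (g::nat \<Rightarrow> poly3).
     (\<forall>i j. i \<le> j \<longrightarrow> j < r \<longrightarrow> b j \<le> b i) \<and>
     (\<forall>i j. i \<le> j \<longrightarrow> j < c \<longrightarrow> a j \<le> a i) \<and>
     (\<forall>i<r. \<forall>j<c. N i j = b i - a j) \<and>
     (\<forall>j<c. hom (g j) (a j)) \<and>
     (\<forall>i<r. \<forall>j<c. hom (f i j) (b i - a j)) \<and>
     I = {(\<Sum>j<c. h j * g j) | h. True} \<and>
     (\<forall>h. (\<Sum>j<c. h j * g j) = 0 \<longrightarrow> (\<exists>u. \<forall>j<c. h j = (\<Sum>i<r. u i * f i j))) \<and>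
     (\<forall>u. (\<forall>j<c. (\<Sum>i<r. u i * f i j) = 0) \<longrightarrow> (\<forall>i<r. u i = 0)))"

text \<open>Matrices: n x n integer matrices as functions, indices 0..n-1.\<close>
definition homogeneous_matrix :: "(nat \<Rightarrow> nat \<Rightarrow> int) \<Rightarrow> nat \<Rightarrow> bool" where
  "homogeneous_matrix M n \<longleftrightarrow> (\<forall>i i' j j'. i < i' \<longrightarrow> i' < n \<longrightarrow> j < j' \<longrightarrow> j' < n \<longrightarrow>
      M i j + M i' j' = M i j' + M i' j)"

definition well_ordered :: "(nat \<Rightarrow> nat \<Rightarrow> int) \<Rightarrow> nat \<Rightarrow> bool" where
  "well_ordered M n \<longleftrightarrow> (\<forall>i i' j j'. i < i' \<longrightarrow> i' < n \<longrightarrow> j < j' \<longrightarrow> j' < n \<longrightarrow>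
      M i' j \<le> M i j \<and> M i j' \<ge> M i j)"

text \<open>Degree of a square homogeneous matrix: sum over any permutation; we use the identity.\<close>
definition matrix_degree :: "(nat \<Rightarrow> nat \<Rightarrow> int) \<Rightarrow> nat \<Rightarrow> int" where
  "matrix_degree M n = (\<Sum>i<n. M i i)"

end

theory Submission
  imports Defs "HOL-Library.Function_Algebras"
begin

lemma poly_expand: "(p::poly3) = (\<Sum>m\<in>Poly_Mapping.keys p. Poly_Mapping.single m (Poly_Mapping.lookup p m))"
  by (rule poly_mapping_eqI) (simp add: lookup_sum lookup_single when_def in_keys_iff sum.delta' split: if_splits)

lemma lookup_sc[simp]: "Poly_Mapping.lookup (sc c p) m = c * Poly_Mapping.lookup p m"
proof -
  have "sc c p = (\<Sum>k\<in>Poly_Mapping.keys p. Poly_Mapping.single k (c * Poly_Mapping.lookup p k))"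
    unfolding sc_def by (subst poly_expand) (simp add: sum_distrib_left mult_single)
  then show ?thesis
    by (simp add: lookup_sum lookup_single when_def in_keys_iff sum.delta' split: if_splits)
qed

lemma sc_eq: "sc c p = sc c 1 * p" by (simp add: sc_def)
lemma sc_mult_left: "sc c (p * q) = sc c p * q" by (simp add: sc_def mult.assoc)

lemma vs_sc: "vector_space sc"
  by unfold_locales (auto intro!: poly_mapping_eqI simp: lookup_add algebra_simps)

definition tsc :: "complex \<Rightarrow> (nat \<Rightarrow> poly3) \<Rightarrow> (nat \<Rightarrow> poly3)" where
  "tsc c h = (\<lambda>j. sc c (h j))"

lemma vs_tsc: "vector_space tsc"
  by unfold_locales (auto intro!: poly_mapping_eqI simp: tsc_def lookup_add algebra_simps)

context Vector_Spaces.linear begin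

lemma span_disj_zero:
  assumes C: "vs1.independent (B \<union> D)" "B \<inter> D = {}" "finite (B \<union> D)"
    and x: "x \<in> vs1.span B" "x \<in> vs1.span D"
  shows "x = 0"
proof -
  have fB: "finite B" "finite D" using C by auto
  obtain u where u: "x = (\<Sum>v\<in>B. s1 (u v) v)" using x(1) vs1.span_finite[OF fB(1)] by auto
  obtain w where w: "x = (\<Sum>v\<in>D. s1 (w v) v)" using x(2) vs1.span_finite[OF fB(2)] by auto
  define c where "c v = (if v \<in> B then u v else - w v)" for v
  have "(\<Sum>v\<in>B \<union> D. s1 (c v) v) = (\<Sum>v\<in>B. s1 (c v) v) + (\<Sum>v\<in>D. s1 (c v) v)"
    using C fB by (simp add: sum.union_disjoint)
  also have "(\<Sum>v\<in>B. s1 (c v) v) = x" using u by (simp add: c_def)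
  also have "(\<Sum>v\<in>D. s1 (c v) v) = (\<Sum>v\<in>D. - s1 (w v) v)" using C(2)
    by (intro sum.cong) (auto simp: c_def vs1.scale_minus_left)
  also have "\<dots> = - x" using w by (simp add: sum_negf)
  finally have "(\<Sum>v\<in>B \<union> D. s1 (c v) v) = 0" by simp
  then have "\<forall>v\<in>B \<union> D. c v = 0"
    using C(1) vs1.dependent_finite[OF C(3)] by blast
  then have "\<forall>v\<in>B. c v = 0" by blast
  then have "\<forall>v\<in>B. u v = 0" by (simp add: c_def)
  then show ?thesis using u by simp
qed


lemma dim_image_le_fin:
  assumes "V \<subseteq> vs1.span F" "finite F"
  shows "vs2.dim (f ` V) \<le> vs1.dim V"
proof -
  obtain B where B: "B \<subseteq> V" "vs1.independent B" "V \<subseteq> vs1.span B" "card B = vs1.dim V"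
    using vs1.basis_exists by blast
  have fB: "finite B" using vs1.independent_span_bound[OF assms(2) B(2)] B(1) assms(1) by auto
  have "vs2.dim (f ` V) \<le> card (f ` B)"
    apply (rule vs2.dim_le_card)
    using spans_image[OF B(3)] fB by auto
  also have "\<dots> \<le> card B" using fB card_image_le by blast
  finally show ?thesis using B by simp
qed


lemma dim_image_inj:
  assumes "vs1.subspace W" "inj_on f W"
  shows "vs2.dim (f ` W) = vs1.dim W"
proof -
  obtain B where B: "B \<subseteq> W" "vs1.independent B" "W \<subseteq> vs1.span B" "card B = vs1.dim W"
    using vs1.basis_exists by blast
  have sp: "vs1.span B \<subseteq> W" using B(1) assms(1) vs1.span_minimal by blast
  have ind: "vs2.independent (f ` B)"
    by (rule independent_injective_image[OF B(2)]) (use assms(2) sp inj_on_subset in blast)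
  have "vs2.dim (f ` W) = card (f ` B)"
    apply (rule vs2.dim_unique[OF _ _ ind refl])
    using B(1) apply blast
    using spans_image[OF B(3)] by blast
  also have "\<dots> = card B" using card_image assms(2) B(1) inj_on_subset by blast
  finally show ?thesis using B by simp
qed

lemma rank_nullity_fin:
  assumes V: "vs1.subspace V" "V \<subseteq> vs1.span F" "finite F"
  shows "vs1.dim V = vs1.dim {x\<in>V. f x = 0} + vs2.dim (f ` V)"
proof -
  let ?N = "{x\<in>V. f x = 0}"
  obtain B where B: "B \<subseteq> ?N" "vs1.independent B" "?N \<subseteq> vs1.span B" "card B = vs1.dim ?N"
    using vs1.basis_exists by blast
  obtain C where C: "B \<subseteq> C" "C \<subseteq> V" "vs1.independent C" "V \<subseteq> vs1.span C"
    using vs1.maximal_independent_subset_extend[OF _ B(2), of V] B(1) by blast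
  have fC: "finite C" using vs1.independent_span_bound[OF V(3) C(3)] C(2) V(2) by auto
  have dV: "vs1.dim V = card C" using vs1.basis_card_eq_dim[OF C(2) C(4) C(3)] by simp
  define D where "D = C - B"
  have CBD: "C = B \<union> D" "B \<inter> D = {}" using C(1) by (auto simp: D_def)
  have spD: "vs1.span D \<subseteq> V" by (rule vs1.span_minimal) (use C(2) V(1) in \<open>auto simp: D_def\<close>)
  have inj: "inj_on f (vs1.span D)"
    unfolding inj_on_iff_eq_0[OF vs1.subspace_span]
  proof (intro ballI impI)
    fix x assume x: "x \<in> vs1.span D" "f x = 0"
    then have "x \<in> vs1.span B" using spD B(3) by blast
    then show "x = 0" using span_disj_zero[of B D x] CBD C(3) fC x by simp
  qed
  have ind: "vs2.independent (f ` D)"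
    by (rule independent_injective_image[OF _ inj]) (rule vs1.independent_mono[OF C(3)], auto simp: D_def)
  have fspan: "f ` V \<subseteq> vs2.span (f ` D)"
  proof
    fix y assume "y \<in> f ` V"
    then obtain x where x: "x \<in> V" "y = f x" by blast
    then have "x \<in> vs1.span (B \<union> D)" using C(4) CBD(1) by blast
    then obtain b d where bd: "x = b + d" "b \<in> vs1.span B" "d \<in> vs1.span D"
      using vs1.span_Un by blast
    have fB0: "\<And>z. z \<in> B \<Longrightarrow> f z = 0" using B(1) by auto
    have "f b = 0" by (rule eq_0_on_span[OF fB0 bd(2)])
    then have "y = f d" using bd x by (simp add: add)
    then show "y \<in> vs2.span (f ` D)" using bd(3) span_image by auto
  qed
  have "vs2.dim (f ` V) = card (f ` D)"
    apply (rule vs2.dim_unique[OF _ fspan ind refl])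
    using C(2) D_def by blast
  also have "\<dots> = card D" using inj_on_subset[OF inj vs1.span_superset] by (rule card_image)
  finally show ?thesis using dV B(4) CBD fC
    by (simp add: card_Un_disjoint)
qed

end

lemma mdeg_add[simp]: "mdeg (m + n) = mdeg m + mdeg n"
  by (simp add: mdeg_def)
lemma mdeg_0[simp]: "mdeg 0 = 0" by (simp add: mdeg_def)

lemma hom_iff: "hom p d \<longleftrightarrow> (\<forall>m. Poly_Mapping.lookup p m \<noteq> 0 \<longrightarrow> int (mdeg m) = d)"
  unfolding hom_def Ball_def in_keys_iff by (rule refl)

lemma hom_0[simp]: "hom 0 d" by (simp add: hom_iff)
lemma hom_add: assumes "hom p d" "hom q d" shows "hom (p + q) d"
  unfolding hom_iff
proof (intro allI impI)
  fix m assume "Poly_Mapping.lookup (p + q) m \<noteq> 0"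
  then have "Poly_Mapping.lookup p m \<noteq> 0 \<or> Poly_Mapping.lookup q m \<noteq> 0" by (auto simp: lookup_add)
  then show "int (mdeg m) = d" using assms unfolding hom_iff by blast
qed
lemma hom_sc: "hom p d \<Longrightarrow> hom (sc c p) d"
  by (auto simp: hom_iff)
lemma hom_uminus: "hom p d \<Longrightarrow> hom (- p) d"
  by (auto simp: hom_iff)
lemma hom_sum: "(\<And>x. x \<in> X \<Longrightarrow> hom (f x) d) \<Longrightarrow> hom (\<Sum>x\<in>X. f x) d"
  by (induction X rule: infinite_finite_induct) (auto intro: hom_add)
lemma hom_mult: assumes "hom p d" "hom q e" shows "hom (p * q) (d + e)"
  unfolding hom_def
proof
  fix m assume "m \<in> Poly_Mapping.keys (p * q)"
  then obtain a b where "m = a + b" "a \<in> Poly_Mapping.keys p" "b \<in> Poly_Mapping.keys q"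
    using keys_mult[of p q] by blast
  then show "int (mdeg m) = d + e" using assms unfolding hom_def by simp
qed
lemma hom_neg: "hom p d \<Longrightarrow> d < 0 \<Longrightarrow> p = 0"
  by (rule poly_mapping_eqI) (auto simp: hom_iff)
lemma hom_single: "hom (Poly_Mapping.single m c) d \<longleftrightarrow> c = 0 \<or> int (mdeg m) = d"
  by (auto simp: hom_def)

lemma lookup_hcomp: "Poly_Mapping.lookup (hcomp p t) m = (if mdeg m = t then Poly_Mapping.lookup p m else 0)"
  unfolding hcomp_def
  by (auto simp: lookup_sum lookup_single when_def in_keys_iff sum.delta' split: if_splits)

definition hc :: "poly3 \<Rightarrow> int \<Rightarrow> poly3" where
  "hc p d = (if d < 0 then 0 else hcomp p (nat d))"

lemma lookup_hc: "Poly_Mapping.lookup (hc p d) m = (if int (mdeg m) = d then Poly_Mapping.lookup p m else 0)"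
  by (auto simp: hc_def lookup_hcomp)

lemma hc_add: "hc (p + q) d = hc p d + hc q d"
  by (rule poly_mapping_eqI) (simp add: lookup_hc lookup_add)
lemma hc_0[simp]: "hc 0 d = 0"
  by (rule poly_mapping_eqI) (simp add: lookup_hc)
lemma hc_sc: "hc (sc c p) d = sc c (hc p d)"
  by (rule poly_mapping_eqI) (simp add: lookup_hc)
lemma hc_sum: "hc (\<Sum>x\<in>X. f x) d = (\<Sum>x\<in>X. hc (f x) d)"
  by (induction X rule: infinite_finite_induct) (auto simp: hc_add)
lemma hc_hom: "hom p d \<Longrightarrow> hc p d = p"
  by (rule poly_mapping_eqI) (auto simp: lookup_hc hom_iff)
lemma hom_hc: "hom (hc p d) d"
  by (auto simp: hom_iff lookup_hc)
lemma hc_single: "hc (Poly_Mapping.single m c) d = (if int (mdeg m) = d then Poly_Mapping.single m c else 0)"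
  by (rule poly_mapping_eqI) (auto simp: lookup_hc lookup_single when_def)

lemma hc_mult:
  assumes g: "hom g a"
  shows "hc (p * g) t = hc p (t - a) * g"
proof -
  let ?P = "Poly_Mapping.keys p" and ?G = "Poly_Mapping.keys g"
  let ?lp = "Poly_Mapping.lookup p" and ?lg = "Poly_Mapping.lookup g"
  have "p * g = (\<Sum>m\<in>?P. \<Sum>n\<in>?G. Poly_Mapping.single m (?lp m) * Poly_Mapping.single n (?lg n))"
    by (subst poly_expand[of p], subst poly_expand[of g]) (simp add: sum_product)
  then have "hc (p * g) t = (\<Sum>m\<in>?P. \<Sum>n\<in>?G. hc (Poly_Mapping.single (m + n) (?lp m * ?lg n)) t)"
    by (simp add: hc_sum mult_single)
  also have "\<dots> = (\<Sum>m\<in>?P. \<Sum>n\<in>?G. hc (Poly_Mapping.single m (?lp m)) (t - a) * Poly_Mapping.single n (?lg n))"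
  proof (intro sum.cong refl)
    fix m n assume "n \<in> ?G"
    then have "int (mdeg n) = a" using g by (simp add: hom_def)
    then show "hc (Poly_Mapping.single (m + n) (?lp m * ?lg n)) t =
        hc (Poly_Mapping.single m (?lp m)) (t - a) * Poly_Mapping.single n (?lg n)"
      by (auto simp: hc_single mult_single)
  qed
  also have "\<dots> = hc p (t - a) * g"
    by (subst poly_expand[of p], subst (2) poly_expand[of g]) (simp add: hc_sum sum_product)
  finally show ?thesis .
qed

definition Mon :: "int \<Rightarrow> mono3 set" where "Mon d = {m. int (mdeg m) = d}"

lemma Mon_neg: "d < 0 \<Longrightarrow> Mon d = {}" by (auto simp: Mon_def)

lemma Mon_nat: "Mon (int k) = (\<lambda>(a,b). (a, b, k - a - b)) ` (SIGMA a:{..k}. {..k-a})"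
proof
  show "Mon (int k) \<subseteq> (\<lambda>(a,b). (a, b, k - a - b)) ` (SIGMA a:{..k}. {..k-a})"
  proof
    fix m assume "m \<in> Mon (int k)"
    then obtain a b c where m: "m = (a,b,c)" "a + b + c = k" by (cases m) (auto simp: Mon_def mdeg_def)
    then show "m \<in> (\<lambda>(a,b). (a, b, k - a - b)) ` (SIGMA a:{..k}. {..k-a})"
      by (auto intro!: image_eqI[of _ _ "(a,b)"])
  qed
  show "(\<lambda>(a,b). (a, b, k - a - b)) ` (SIGMA a:{..k}. {..k-a}) \<subseteq> Mon (int k)"
    by (auto simp: Mon_def mdeg_def)
qed

lemma sum_tri: "2 * (\<Sum>a\<le>k. Suc (k - a)) = (k+1)*(k+2)"
proof (induction k)
  case (Suc k)
  have "(\<Sum>a\<le>Suc k. Suc (Suc k - a)) = (\<Sum>a\<le>k. Suc (Suc k - a)) + 1" by simp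
  also have "(\<Sum>a\<le>k. Suc (Suc k - a)) = (\<Sum>a\<le>k. Suc (k - a) + 1)"
    by (intro sum.cong) (auto simp: Suc_diff_le)
  also have "\<dots> = (\<Sum>a\<le>k. Suc (k - a)) + (k+1)" by (subst sum.distrib) simp
  finally show ?case using Suc by simp
qed simp

lemma card_Mon_nat: "2 * card (Mon (int k)) = (k+1)*(k+2)"
proof -
  have inj: "inj_on (\<lambda>(a,b). (a, b, k - a - b)) (SIGMA a:{..k}. {..k-a})"
    by (auto simp: inj_on_def)
  have "card (Mon (int k)) = card (SIGMA a:{..k}. {..k-a})"
    unfolding Mon_nat by (rule card_image[OF inj])
  also have "\<dots> = (\<Sum>a\<le>k. Suc (k - a))" by (simp add: card_SigmaI)
  finally show ?thesis using sum_tri by simp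
qed

lemma finite_Mon[simp]: "finite (Mon d)"
proof (cases "d < 0")
  case True then show ?thesis by (simp add: Mon_neg)
next
  case False
  have "finite (Mon (int (nat d)))" unfolding Mon_nat by (intro finite_imageI finite_SigmaI) auto
  then show ?thesis using False by simp
qed

lemma card_Mon: "d \<ge> 0 \<Longrightarrow> 2 * int (card (Mon d)) = (d+1)*(d+2)"
proof -
  assume "d \<ge> 0"
  then obtain k where k: "d = int k" by (rule nonneg_int_cases)
  have "2 * card (Mon (int k)) = (k+1)*(k+2)" by (rule card_Mon_nat)
  then have "int (2 * card (Mon (int k))) = int ((k+1)*(k+2))" by simp
  then show ?thesis unfolding k by (simp add: algebra_simps)
qed

interpretation P: vector_space sc by (rule vs_sc)
interpretation T: vector_space tsc by (rule vs_tsc)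

definition TS :: "nat \<Rightarrow> (nat \<Rightarrow> int) \<Rightarrow> (nat \<Rightarrow> poly3) set" where
  "TS c \<delta> = {h. (\<forall>j<c. hom (h j) (\<delta> j)) \<and> (\<forall>j\<ge>c. h j = 0)}"

definition Idx :: "nat \<Rightarrow> (nat \<Rightarrow> int) \<Rightarrow> (nat \<times> mono3) set" where
  "Idx c \<delta> = (SIGMA k:{..<c}. Mon (\<delta> k))"

definition ev :: "nat \<times> mono3 \<Rightarrow> (nat \<Rightarrow> poly3)" where
  "ev x = (\<lambda>j. if j = fst x then Poly_Mapping.single (snd x) 1 else 0)"

lemma finite_Idx[simp]: "finite (Idx c \<delta>)" by (simp add: Idx_def)

lemma tsc_apply: "tsc c h j = sc c (h j)" by (simp add: tsc_def)

lemma lookup_tsum: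
  assumes "finite X"
  shows "Poly_Mapping.lookup ((\<Sum>x\<in>X. tsc (w x) (ev x)) j) m = (if (j,m) \<in> X then w (j,m) else 0)"
  using assms
proof (induction X rule: finite_induct)
  case (insert x X)
  then show ?case
    by (cases x) (auto simp: lookup_add tsc_apply ev_def lookup_single when_def)
qed simp

lemma T_subspace_TS: "T.subspace (TS c \<delta>)"
  by (auto simp: T.subspace_def TS_def tsc_apply intro: hom_add hom_sc)

lemma TS_span: "TS c \<delta> \<subseteq> T.span (ev ` Idx c \<delta>)"
proof
  fix h assume h: "h \<in> TS c \<delta>"
  have "h = (\<Sum>x\<in>Idx c \<delta>. tsc (Poly_Mapping.lookup (h (fst x)) (snd x)) (ev x))" (is "h = ?s")
  proof
    fix j
    show "h j = ?s j"
    proof (rule poly_mapping_eqI)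
      fix m
      show "Poly_Mapping.lookup (h j) m = Poly_Mapping.lookup (?s j) m"
      proof (cases "(j,m) \<in> Idx c \<delta>")
        case True then show ?thesis by (simp add: lookup_tsum)
      next
        case False
        have "Poly_Mapping.lookup (h j) m = 0"
        proof (cases "j < c")
          case True
          then have "hom (h j) (\<delta> j)" using h by (simp add: TS_def)
          moreover have "int (mdeg m) \<noteq> \<delta> j" using False True by (simp add: Idx_def Mon_def)
          ultimately show ?thesis unfolding hom_iff by blast
        next
          case False then show ?thesis using h by (simp add: TS_def)
        qed
        then show ?thesis using False by (simp add: lookup_tsum)
      qed
    qed
  qed
  also have "\<dots> \<in> T.span (ev ` Idx c \<delta>)"
    by (intro T.span_sum T.span_scale T.span_base) auto
  finally show "h \<in> T.span (ev ` Idx c \<delta>)" .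
qed

lemma ev_inj: "inj ev"
proof (rule injI)
  fix x y assume "ev x = ev y"
  then have "ev x (fst x) = ev y (fst x)" by simp
  then have e: "Poly_Mapping.single (snd x) (1::complex) = (if fst x = fst y then Poly_Mapping.single (snd y) 1 else 0)"
    by (simp add: ev_def)
  have "Poly_Mapping.lookup (Poly_Mapping.single (snd x) (1::complex)) (snd x) = 1" by simp
  then have "fst x = fst y \<and> Poly_Mapping.lookup (Poly_Mapping.single (snd y) (1::complex)) (snd x) = 1"
    using e by (auto split: if_splits)
  then show "x = y" by (auto simp: lookup_single when_def split: if_splits intro: prod_eqI)
qed

lemma ev_indep: "T.independent (ev ` Idx c \<delta>)"
proof (rule T.independent_if_scalars_zero)
  show "finite (ev ` Idx c \<delta>)" by simp
  fix f v assume s: "(\<Sum>x\<in>ev ` Idx c \<delta>. tsc (f x) x) = 0" and v: "v \<in> ev ` Idx c \<delta>"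
  then obtain x where x: "x \<in> Idx c \<delta>" "v = ev x" by blast
  have "(\<Sum>y\<in>Idx c \<delta>. tsc (f (ev y)) (ev y)) = 0"
    using s by (simp add: sum.reindex inj_on_subset[OF ev_inj])
  then have "Poly_Mapping.lookup ((\<Sum>y\<in>Idx c \<delta>. tsc (f (ev y)) (ev y)) (fst x)) (snd x) = 0"
    by simp
  then show "f v = 0" using x by (simp add: lookup_tsum)
qed

lemma ev_in_TS: "ev ` Idx c \<delta> \<subseteq> TS c \<delta>"
  by (auto simp: ev_def TS_def Idx_def Mon_def hom_single)

lemma dim_TS: "T.dim (TS c \<delta>) = (\<Sum>k<c. card (Mon (\<delta> k)))"
proof -
  have "T.dim (TS c \<delta>) = card (ev ` Idx c \<delta>)"
    by (rule T.dim_unique[OF ev_in_TS TS_span ev_indep refl])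
  also have "\<dots> = card (Idx c \<delta>)" by (rule card_image[OF inj_on_subset[OF ev_inj]]) simp
  also have "\<dots> = (\<Sum>k<c. card (Mon (\<delta> k)))" by (simp add: Idx_def card_SigmaI)
  finally show ?thesis .
qed

lemma sc_sum: "sc k (\<Sum>x\<in>X. p x) = (\<Sum>x\<in>X. sc k (p x))"
  by (simp add: sc_def sum_distrib_left)

lemma sum_delta_l: "(j::nat) < c \<Longrightarrow> (\<Sum>k<c. (if k = j then x else 0) * y k) = (x::poly3) * y j"
proof -
  assume "j < c"
  have "(\<Sum>k<c. (if k = j then x else 0) * y k) = (\<Sum>k<c. if k = j then x * y k else 0)"
    by (intro sum.cong) auto
  then show ?thesis using \<open>j < c\<close> by (simp add: sum.delta')
qed

lemma sum_delta_r: "(j::nat) < c \<Longrightarrow> (\<Sum>k<c. y k * (if j = k then x else 0)) = y j * (x::poly3)"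
proof -
  assume "j < c"
  have "(\<Sum>k<c. y k * (if j = k then x else 0)) = (\<Sum>k<c. if j = k then y k * x else 0)"
    by (intro sum.cong) auto
  then show ?thesis using \<open>j < c\<close> by (simp add: sum.delta)
qed

locale resol =
  fixes I :: "poly3 set" and r c :: nat and a b :: "nat \<Rightarrow> int"
    and f :: "nat \<Rightarrow> nat \<Rightarrow> poly3" and g :: "nat \<Rightarrow> poly3"
  assumes c_eq: "c = r + 1"
    and g_hom: "\<forall>j<c. hom (g j) (a j)"
    and f_hom: "\<forall>i<r. \<forall>j<c. hom (f i j) (b i - a j)"
    and I_eq: "I = {(\<Sum>j<c. h j * g j) | h. True}"
    and exact: "\<forall>h. (\<Sum>j<c. h j * g j) = 0 \<longrightarrow> (\<exists>u. \<forall>j<c. h j = (\<Sum>i<r. u i * f i j))"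
    and finj: "\<forall>u. (\<forall>j<c. (\<Sum>i<r. u i * f i j) = 0) \<longrightarrow> (\<forall>i<r. u i = 0)"
begin

lemma comp_zero:
  assumes i0: "i0 < r"
  shows "(\<Sum>k<c. f i0 k * g k) = 0"
proof -
  define w where "w = (\<Sum>k<c. f i0 k * g k)"
  have "\<forall>j. \<exists>u. j < c \<longrightarrow> (\<forall>k<c. g j * f i0 k - (if k = j then w else 0) = (\<Sum>i<r. u i * f i k))"
  proof (intro allI impI)
    fix j
    show "\<exists>u. j < c \<longrightarrow> (\<forall>k<c. g j * f i0 k - (if k = j then w else 0) = (\<Sum>i<r. u i * f i k))"
    proof (cases "j < c")
      case True
      let ?h = "\<lambda>k. g j * f i0 k - (if k = j then w else 0)"
      have "(\<Sum>k<c. ?h k * g k) = (\<Sum>k<c. g j * (f i0 k * g k)) - (\<Sum>k<c. (if k = j then w else 0) * g k)"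
        by (simp add: left_diff_distrib sum_subtractf mult.assoc)
      also have "\<dots> = g j * w - w * g j"
        using True by (simp add: w_def sum_distrib_left sum_delta_l)
      finally have "(\<Sum>k<c. ?h k * g k) = 0" by (simp add: mult.commute)
      from exact[rule_format, OF this] obtain u where "\<forall>k<c. ?h k = (\<Sum>i<r. u i * f i k)" by blast
      then show ?thesis by blast
    qed simp
  qed
  then obtain U where U0: "\<forall>j. j < c \<longrightarrow> (\<forall>k<c. g j * f i0 k - (if k = j then w else 0) = (\<Sum>i<r. U j i * f i k))"
    by (rule choice[THEN exE]) 
  have U: "g j * f i0 k - (if k = j then w else 0) = (\<Sum>i<r. U j i * f i k)" if "j < c" "k < c" for j k
    using U0 that by blast
  define U' where "U' j i = (if i = i0 then g j else 0) - U j i" for j i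
  have U'A: "(\<Sum>i<r. U' j i * f i k) = (if k = j then w else 0)" if "j < c" "k < c" for j k
  proof -
    have "(\<Sum>i<r. U' j i * f i k) = (\<Sum>i<r. (if i = i0 then g j else 0) * f i k) - (\<Sum>i<r. U j i * f i k)"
      by (simp add: U'_def left_diff_distrib sum_subtractf)
    also have "(\<Sum>i<r. (if i = i0 then g j else 0) * f i k) = g j * f i0 k"
      using sum_delta_l[OF i0, of "g j" "\<lambda>i. f i k"] by simp
    finally show ?thesis using U[OF that] by (cases "k = j") (auto simp: diff_eq_eq eq_diff_eq add.commute)
  qed
  have AU': "(\<Sum>k<c. f l k * U' k l) = w" if l: "l < r" for l
  proof -
    define x where "x m = (\<Sum>k<c. f l k * U' k m) - (if m = l then w else 0)" for m
    have "\<forall>q<c. (\<Sum>m<r. x m * f m q) = 0"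
    proof (intro allI impI)
      fix q assume q: "q < c"
      have "(\<Sum>m<r. x m * f m q) = (\<Sum>m<r. \<Sum>k<c. f l k * (U' k m * f m q)) - (\<Sum>m<r. (if m = l then w else 0) * f m q)"
        by (simp add: x_def left_diff_distrib sum_subtractf sum_distrib_right mult.assoc)
      also have "(\<Sum>m<r. \<Sum>k<c. f l k * (U' k m * f m q)) = (\<Sum>k<c. f l k * (\<Sum>m<r. U' k m * f m q))"
        by (subst sum.swap) (simp add: sum_distrib_left)
      also have "\<dots> = (\<Sum>k<c. f l k * (if q = k then w else 0))"
        using q by (intro sum.cong refl) (simp add: U'A)
      also have "\<dots> = f l q * w" using q by (rule sum_delta_r)
      also have "(\<Sum>m<r. (if m = l then w else 0) * f m q) = w * f l q"
        using l by (rule sum_delta_l)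
      finally show "(\<Sum>m<r. x m * f m q) = 0" by (simp add: mult.commute)
    qed
    then have "x l = 0" using finj l by blast
    then show ?thesis by (simp add: x_def)
  qed
  have "(\<Sum>l<r. \<Sum>k<c. f l k * U' k l) = of_nat r * w" using AU' by simp
  moreover have "(\<Sum>k<c. \<Sum>l<r. U' k l * f l k) = of_nat c * w" using U'A by simp
  moreover have "(\<Sum>l<r. \<Sum>k<c. f l k * U' k l) = (\<Sum>k<c. \<Sum>l<r. U' k l * f l k)"
    by (subst sum.swap) (simp add: mult.commute)
  ultimately have "of_nat c * w = of_nat r * w" by simp
  then have "of_nat r * w + w = of_nat r * w + 0" by (simp add: c_eq distrib_right)
  then have "w = 0" by (rule add_left_cancel[THEN iffD1])
  then show ?thesis by (simp add: w_def)
qed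

definition L :: "(nat \<Rightarrow> poly3) \<Rightarrow> poly3" where "L h = (\<Sum>j<c. h j * g j)"
definition K :: "(nat \<Rightarrow> poly3) \<Rightarrow> (nat \<Rightarrow> poly3)" where
  "K u = (\<lambda>j. if j < c then (\<Sum>i<r. u i * f i j) else 0)"

lemma linL: "Vector_Spaces.linear tsc sc L"
  unfolding Vector_Spaces.linear_iff
proof (intro conjI allI)
  show "vector_space tsc" by (rule vs_tsc)
  show "vector_space sc" by (rule vs_sc)
  fix x y :: "nat \<Rightarrow> poly3"
  show "L (x + y) = L x + L y" by (simp add: L_def distrib_right sum.distrib)
next
  fix k and x :: "nat \<Rightarrow> poly3"
  show "L (tsc k x) = sc k (L x)"
    by (simp add: L_def tsc_apply sc_sum sc_mult_left)
qed

lemma linK: "Vector_Spaces.linear tsc tsc K"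
  unfolding Vector_Spaces.linear_iff
proof (intro conjI allI)
  show "vector_space tsc" by (rule vs_tsc)
  show "vector_space tsc" by (rule vs_tsc)
  fix x y :: "nat \<Rightarrow> poly3"
  show "K (x + y) = K x + K y" by (rule ext) (simp add: K_def distrib_right sum.distrib)
next
  fix k and x :: "nat \<Rightarrow> poly3"
  show "K (tsc k x) = tsc k (K x)"
    by (rule ext) (simp add: K_def tsc_apply sc_sum sc_mult_left)
qed

lemma LV: "L ` TS c (\<lambda>j. t - a j) = {p\<in>I. hom p t}"
proof
  show "L ` TS c (\<lambda>j. t - a j) \<subseteq> {p\<in>I. hom p t}"
  proof
    fix p assume "p \<in> L ` TS c (\<lambda>j. t - a j)"
    then obtain h where h: "h \<in> TS c (\<lambda>j. t - a j)" "p = L h" by blast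
    have "p \<in> I" using h(2) by (auto simp: I_eq L_def)
    moreover have "hom p t" unfolding h(2) L_def
    proof (rule hom_sum)
      fix j assume "j \<in> {..<c}"
      then have "hom (h j * g j) ((t - a j) + a j)"
        using h(1) g_hom by (intro hom_mult) (auto simp: TS_def)
      then show "hom (h j * g j) t" by simp
    qed
    ultimately show "p \<in> {p\<in>I. hom p t}" by blast
  qed
  show "{p\<in>I. hom p t} \<subseteq> L ` TS c (\<lambda>j. t - a j)"
  proof
    fix p assume p: "p \<in> {p\<in>I. hom p t}"
    then obtain h where h: "p = (\<Sum>j<c. h j * g j)" by (auto simp: I_eq)
    define h' where "h' j = (if j < c then hc (h j) (t - a j) else 0)" for j
    have "h' \<in> TS c (\<lambda>j. t - a j)" by (auto simp: TS_def h'_def hom_hc)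
    moreover have "L h' = p"
    proof -
      have "L h' = (\<Sum>j<c. hc (h j * g j) t)"
        unfolding L_def h'_def
      proof (intro sum.cong refl)
        fix j assume "j \<in> {..<c}"
        then show "(if j < c then hc (h j) (t - a j) else 0) * g j = hc (h j * g j) t"
          using hc_mult[of "g j" "a j" "h j" t] g_hom by simp
      qed
      also have "\<dots> = hc p t" by (simp add: h hc_sum)
      also have "\<dots> = p" using p by (simp add: hc_hom)
      finally show ?thesis .
    qed
    ultimately show "p \<in> L ` TS c (\<lambda>j. t - a j)" by blast
  qed
qed

lemma K_in: "u \<in> TS r (\<lambda>i. t - b i) \<Longrightarrow> K u \<in> TS c (\<lambda>j. t - a j)"
proof -
  assume u: "u \<in> TS r (\<lambda>i. t - b i)"
  have "hom (\<Sum>i<r. u i * f i j) (t - a j)" if j: "j < c" for j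
  proof (rule hom_sum)
    fix i assume "i \<in> {..<r}"
    then have "hom (u i * f i j) ((t - b i) + (b i - a j))"
      using u f_hom j by (intro hom_mult) (auto simp: TS_def)
    then show "hom (u i * f i j) (t - a j)" by simp
  qed
  then show ?thesis by (auto simp: TS_def K_def)
qed

lemma NK: "{h\<in>TS c (\<lambda>j. t - a j). L h = 0} = K ` TS r (\<lambda>i. t - b i)"
proof
  show "{h\<in>TS c (\<lambda>j. t - a j). L h = 0} \<subseteq> K ` TS r (\<lambda>i. t - b i)"
  proof
    fix h assume h: "h \<in> {h\<in>TS c (\<lambda>j. t - a j). L h = 0}"
    then obtain u where u: "\<forall>j<c. h j = (\<Sum>i<r. u i * f i j)"
      using exact by (auto simp: L_def)
    define u' where "u' i = (if i < r then hc (u i) (t - b i) else 0)" for i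
    have u'W: "u' \<in> TS r (\<lambda>i. t - b i)" by (auto simp: TS_def u'_def hom_hc)
    have "K u' = h"
    proof
      fix j show "K u' j = h j"
      proof (cases "j < c")
        case True
        have "K u' j = (\<Sum>i<r. hc (u i) (t - b i) * f i j)" using True by (simp add: K_def u'_def)
        also have "\<dots> = (\<Sum>i<r. hc (u i * f i j) (t - a j))"
        proof (intro sum.cong refl)
          fix i assume "i \<in> {..<r}"
          then show "hc (u i) (t - b i) * f i j = hc (u i * f i j) (t - a j)"
            using hc_mult[of "f i j" "b i - a j" "u i" "t - a j"] f_hom True by simp
        qed
        also have "\<dots> = hc (h j) (t - a j)" using u True by (simp add: hc_sum)
        also have "\<dots> = h j" using h True by (simp add: TS_def hc_hom)
        finally show ?thesis .
      next
        case False then show ?thesis using h by (simp add: K_def TS_def)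
      qed
    qed
    then show "h \<in> K ` TS r (\<lambda>i. t - b i)" using u'W by blast
  qed
  show "K ` TS r (\<lambda>i. t - b i) \<subseteq> {h\<in>TS c (\<lambda>j. t - a j). L h = 0}"
  proof
    fix h assume "h \<in> K ` TS r (\<lambda>i. t - b i)"
    then obtain u where u: "u \<in> TS r (\<lambda>i. t - b i)" "h = K u" by blast
    have "L (K u) = (\<Sum>j<c. \<Sum>i<r. u i * (f i j * g j))"
      by (simp add: L_def K_def sum_distrib_right mult.assoc)
    also have "\<dots> = (\<Sum>i<r. u i * (\<Sum>j<c. f i j * g j))"
      by (subst sum.swap) (simp add: sum_distrib_left)
    also have "\<dots> = 0" by (simp add: comp_zero)
    finally show "h \<in> {h\<in>TS c (\<lambda>j. t - a j). L h = 0}" using K_in[OF u(1)] u(2) by simp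
  qed
qed

lemma injK: "inj_on K (TS r (\<lambda>i. t - b i))"
proof (rule inj_onI)
  fix x y assume x: "x \<in> TS r (\<lambda>i. t - b i)" and y: "y \<in> TS r (\<lambda>i. t - b i)" and e: "K x = K y"
  have "\<forall>j<c. (\<Sum>i<r. (x i - y i) * f i j) = 0"
  proof (intro allI impI)
    fix j assume "j < c"
    then have "K x j = K y j" using e by simp
    then show "(\<Sum>i<r. (x i - y i) * f i j) = 0" using \<open>j < c\<close>
      by (simp add: K_def left_diff_distrib sum_subtractf)
  qed
  then have "\<forall>i<r. x i - y i = 0" using finj[rule_format, of "\<lambda>i. x i - y i"] by blast
  then show "x = y" using x y by (auto simp: TS_def intro!: ext) (metis not_less)
qed

lemma dim_formula:
  "P.dim {p\<in>I. hom p t} + (\<Sum>i<r. card (Mon (t - b i))) = (\<Sum>j<c. card (Mon (t - a j)))"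
proof -
  have rn: "T.dim (TS c (\<lambda>j. t - a j)) = T.dim {h\<in>TS c (\<lambda>j. t - a j). L h = 0} + P.dim (L ` TS c (\<lambda>j. t - a j))"
    by (rule linear.rank_nullity_fin[OF linL T_subspace_TS TS_span]) simp
  have di: "T.dim (K ` TS r (\<lambda>i. t - b i)) = T.dim (TS r (\<lambda>i. t - b i))"
    by (rule linear.dim_image_inj[OF linK T_subspace_TS injK])
  show ?thesis using rn di by (simp add: NK LV dim_TS)
qed

end

definition iota :: "poly3 \<Rightarrow> (nat \<Rightarrow> poly3)" where
  "iota p = (\<lambda>j. if j = 0 then p else 0)"

lemma lin_iota: "Vector_Spaces.linear sc tsc iota"
  unfolding Vector_Spaces.linear_iff
proof (intro conjI allI)
  show "vector_space tsc" by (rule vs_tsc)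
  show "vector_space sc" by (rule vs_sc)
  fix x y show "iota (x + y) = iota x + iota y" by (rule ext) (simp add: iota_def)
next
  fix k x show "iota (sc k x) = tsc k (iota x)" by (rule ext) (simp add: iota_def tsc_apply sc_def)
qed

lemma inj_iota: "inj iota"
  by (rule injI) (metis iota_def)

lemma iota_S: "iota ` {p. hom p t} = TS 1 (\<lambda>_. t)"
proof
  show "iota ` {p. hom p t} \<subseteq> TS 1 (\<lambda>_. t)" by (auto simp: iota_def TS_def)
  show "TS 1 (\<lambda>_. t) \<subseteq> iota ` {p. hom p t}"
  proof
    fix h assume h: "h \<in> TS 1 (\<lambda>_. t)"
    then have "h = iota (h 0)" by (auto simp: iota_def TS_def intro!: ext)
    moreover have "hom (h 0) t" using h by (simp add: TS_def)
    ultimately show "h \<in> iota ` {p. hom p t}" by blast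
  qed
qed

lemma P_subspace_S: "P.subspace {p. hom p t}"
  by (auto simp: P.subspace_def intro: hom_add hom_sc)

lemma P_subspace_It: "is_ideal I \<Longrightarrow> P.subspace {p\<in>I. hom p t}"
  unfolding P.subspace_def is_ideal_def
  by (auto intro: hom_add hom_sc) (metis sc_eq)

lemma dim_S: "P.dim {p. hom p t} = card (Mon t)"
proof -
  have "T.dim (iota ` {p. hom p t}) = P.dim {p. hom p t}"
    by (rule linear.dim_image_inj[OF lin_iota P_subspace_S]) (use inj_iota inj_on_subset in blast)
  then show ?thesis by (simp add: iota_S dim_TS)
qed

lemma dim_It_le: "is_ideal I \<Longrightarrow> P.dim {p\<in>I. hom p t} \<le> card (Mon t)"
proof -
  assume I: "is_ideal I"
  have "T.dim (iota ` {p\<in>I. hom p t}) = P.dim {p\<in>I. hom p t}"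
    by (rule linear.dim_image_inj[OF lin_iota P_subspace_It[OF I]]) (use inj_iota inj_on_subset in blast)
  moreover have "T.dim (iota ` {p\<in>I. hom p t}) \<le> card (ev ` Idx 1 (\<lambda>_. t))"
  proof (rule T.dim_le_card)
    have "iota ` {p\<in>I. hom p t} \<subseteq> TS 1 (\<lambda>_. t)" using iota_S by blast
    then show "iota ` {p\<in>I. hom p t} \<subseteq> T.span (ev ` Idx 1 (\<lambda>_. t))" using TS_span by blast
  qed simp
  moreover have "card (ev ` Idx 1 (\<lambda>_. t)) = card (Mon t)"
    by (subst card_image[OF inj_on_subset[OF ev_inj]]) (auto simp: Idx_def card_SigmaI)
  ultimately show ?thesis by simp
qed

lemma hilb_eq: "t \<ge> 0 \<Longrightarrow> is_ideal I \<Longrightarrow> int (hilb I t) = int (card (Mon t)) - int (P.dim {p\<in>I. hom p t})"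
  using dim_It_le[of I t] by (simp add: hilb_def cdim_def dim_S)

lemma hom_mult_span:
  assumes "hom q d'"
  shows "q * g \<in> P.span ((\<lambda>m. Poly_Mapping.single m 1 * g) ` Mon d')"
proof -
  have "q * g = (\<Sum>m\<in>Poly_Mapping.keys q. sc (Poly_Mapping.lookup q m) (Poly_Mapping.single m 1 * g))"
  proof -
    have "q = (\<Sum>m\<in>Poly_Mapping.keys q. sc (Poly_Mapping.lookup q m) (Poly_Mapping.single m 1))"
      by (subst poly_expand) (simp add: sc_def mult_single)
    then show ?thesis by (metis (no_types, lifting) sc_mult_left sum.cong sum_distrib_right)
  qed
  also have "\<dots> \<in> P.span ((\<lambda>m. Poly_Mapping.single m 1 * g) ` Mon d')"
    using assms by (intro P.span_sum P.span_scale P.span_base) (auto simp: Mon_def hom_def)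
  finally show ?thesis .
qed

lemma principal_contra:
  assumes Z: "zero_dim_ideal I" and Ig: "I \<subseteq> {h * g | h. True}" and g: "hom g a"
    and ag: "a \<ge> 1 \<or> g = 0"
  shows False
proof -
  from Z obtain e t1 where e: "\<forall>t\<ge>t1. hilb I t = e" and I: "is_ideal I"
    by (auto simp: zero_dim_ideal_def homogeneous_ideal_def)
  define t where "t = max (max t1 (int e)) 1"
  have t: "t \<ge> t1" "t \<ge> int e" "t \<ge> 1" by (auto simp: t_def)
  have sub: "{p\<in>I. hom p t} \<subseteq> P.span ((\<lambda>m. Poly_Mapping.single m 1 * g) ` Mon (t - a))"
  proof
    fix p assume p: "p \<in> {p\<in>I. hom p t}"
    then obtain h where "p = h * g" using Ig by blast
    then have "p = hc h (t - a) * g" using p hc_mult[OF g, of h t] by (simp add: hc_hom)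
    then show "p \<in> P.span ((\<lambda>m. Poly_Mapping.single m 1 * g) ` Mon (t - a))"
      using hom_mult_span[OF hom_hc] by simp
  qed
  have dle: "P.dim {p\<in>I. hom p t} \<le> (if g = 0 then 0 else card (Mon (t - a)))"
  proof (cases "g = 0")
    case True
    have "{p\<in>I. hom p t} \<subseteq> P.span {}"
    proof
      fix p assume "p \<in> {p\<in>I. hom p t}"
      then have "p = 0" using Ig True by auto
      then show "p \<in> P.span {}" by simp
    qed
    then show ?thesis using P.dim_le_card[of _ "{}"] True by simp
  next
    case False
    have "P.dim {p\<in>I. hom p t} \<le> card ((\<lambda>m. Poly_Mapping.single m 1 * g) ` Mon (t - a))"
      by (rule P.dim_le_card[OF sub]) simp
    also have "\<dots> \<le> card (Mon (t - a))" by (rule card_image_le) simp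
    finally show ?thesis using False by simp
  qed
  have "2 * int (hilb I t) \<ge> 2 * (t + 1)"
  proof (cases "g = 0")
    case True
    then have "2 * int (hilb I t) = (t+1)*(t+2)" using dle hilb_eq[of t I] I card_Mon[of t] t by simp
    moreover have "(t+1)*(t+2) \<ge> 2*(t+1)"
    proof -
      have "(t+1)*2 \<le> (t+1)*(t+2)" using t by (intro mult_left_mono) auto
      then show ?thesis by (simp add: mult.commute)
    qed
    ultimately show ?thesis by linarith
  next
    case False
    then have a1: "a \<ge> 1" using ag by simp
    have "2 * int (card (Mon (t - a))) \<le> t * (t+1)"
    proof (cases "t - a < 0")
      case True then show ?thesis using t by (simp add: Mon_neg)
    next
      case False
      then have "2 * int (card (Mon (t - a))) = (t - a + 1) * (t - a + 2)" by (simp add: card_Mon)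
      also have "\<dots> \<le> t * (t+1)" using False a1 by (intro mult_mono) auto
      finally show ?thesis .
    qed
    moreover have "2 * int (hilb I t) \<ge> (t+1)*(t+2) - 2 * int (card (Mon (t - a)))"
      using dle hilb_eq[of t I] I card_Mon[of t] t False by simp
    ultimately show ?thesis by (simp add: algebra_simps)
  qed
  moreover have "hilb I t = e" using e t by simp
  ultimately show False using t by simp
qed

lemma Q_card: "x \<ge> -2 \<Longrightarrow> 2 * int (card (Mon x)) = (x+1)*(x+2)"
proof (cases "x \<ge> 0")
  case True then show ?thesis by (rule card_Mon)
next
  case False
  assume "x \<ge> -2"
  then have "x = -1 \<or> x = -2" using False by linarith
  then show ?thesis using False by (auto simp: Mon_neg)
qed

lemma sum_Q:
  assumes "\<forall>j<n. (x j::int) \<le> t + 2"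
  shows "2 * (\<Sum>j<n. int (card (Mon (t - x j)))) = int n * ((t+1)*(t+2)) - (2*t+3) * (\<Sum>j<n. x j) + (\<Sum>j<n. (x j)^2)"
proof -
  have "2 * (\<Sum>j<n. int (card (Mon (t - x j)))) = (\<Sum>j<n. 2 * int (card (Mon (t - x j))))"
    by (simp add: sum_distrib_left)
  also have "\<dots> = (\<Sum>j<n. (t+1)*(t+2) - (2*t+3) * x j + (x j)^2)"
  proof (intro sum.cong refl)
    fix j assume "j \<in> {..<n}"
    then have "t - x j \<ge> -2" using assms by auto
    then have "2 * int (card (Mon (t - x j))) = (t - x j + 1)*(t - x j + 2)" by (rule Q_card)
    also have "\<dots> = (t+1)*(t+2) - (2*t+3) * x j + (x j)^2" by (simp add: algebra_simps power2_eq_square)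
    finally show "2 * int (card (Mon (t - x j))) = (t+1)*(t+2) - (2*t+3) * x j + (x j)^2" .
  qed
  also have "\<dots> = int n * ((t+1)*(t+2)) - (2*t+3) * (\<Sum>j<n. x j) + (\<Sum>j<n. (x j)^2)"
    by (simp add: sum.distrib sum_subtractf sum_distrib_left)
  finally show ?thesis .
qed

context resol begin

lemma hilb_formula:
  assumes I: "is_ideal I" and t: "t \<ge> 0" "\<forall>j<c. a j \<le> t + 2" "\<forall>i<r. b i \<le> t + 2"
  shows "2 * int (hilb I t) = (2*t+3) * ((\<Sum>j<c. a j) - (\<Sum>i<r. b i)) + (\<Sum>i<r. (b i)^2) - (\<Sum>j<c. (a j)^2)"
proof -
  have df: "int (P.dim {p\<in>I. hom p t}) + (\<Sum>i<r. int (card (Mon (t - b i)))) = (\<Sum>j<c. int (card (Mon (t - a j))))"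
    using arg_cong[OF dim_formula[of t], of int] by simp
  have h: "int (hilb I t) = int (card (Mon t)) - int (P.dim {p\<in>I. hom p t})" by (rule hilb_eq[OF t(1) I])
  have ct: "2 * int (card (Mon t)) = (t+1)*(t+2)" by (rule card_Mon[OF t(1)])
  have sa: "2 * (\<Sum>j<c. int (card (Mon (t - a j)))) = int c * ((t+1)*(t+2)) - (2*t+3) * (\<Sum>j<c. a j) + (\<Sum>j<c. (a j)^2)"
    by (rule sum_Q[OF t(2)])
  have sb: "2 * (\<Sum>i<r. int (card (Mon (t - b i)))) = int r * ((t+1)*(t+2)) - (2*t+3) * (\<Sum>i<r. b i) + (\<Sum>i<r. (b i)^2)"
    by (rule sum_Q[OF t(3)])
  have "2 * int (hilb I t) = (t+1)*(t+2) - 2 * (\<Sum>j<c. int (card (Mon (t - a j)))) + 2 * (\<Sum>i<r. int (card (Mon (t - b i))))"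
    using h ct df by linarith
  also have "\<dots> = (t+1)*(t+2) * (1 - int c + int r) + (2*t+3) * ((\<Sum>j<c. a j) - (\<Sum>i<r. b i)) + (\<Sum>i<r. (b i)^2) - (\<Sum>j<c. (a j)^2)"
    unfolding sa sb by (simp add: algebra_simps)
  also have "1 - int c + int r = 0" by (simp add: c_eq)
  finally show ?thesis by simp
qed

end

lemma hom0_const: "hom q 0 \<Longrightarrow> q = Poly_Mapping.single 0 (Poly_Mapping.lookup q 0)"
proof (rule poly_mapping_eqI)
  fix m assume q: "hom q 0"
  show "Poly_Mapping.lookup q m = Poly_Mapping.lookup (Poly_Mapping.single 0 (Poly_Mapping.lookup q 0)) m"
  proof (cases "m = 0")
    case True then show ?thesis by simp
  next
    case False
    then have "mdeg m \<noteq> 0" by (cases m) (auto simp: mdeg_def zero_prod_def)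
    then have "Poly_Mapping.lookup q m = 0" using q unfolding hom_iff by (metis of_nat_eq_0_iff)
    then show ?thesis using False by (simp add: lookup_single when_def)
  qed
qed

lemma unit_const: "k \<noteq> 0 \<Longrightarrow> sc (1/k) p * Poly_Mapping.single 0 k = p"
proof -
  assume k: "k \<noteq> 0"
  have "sc (1/k) p * Poly_Mapping.single 0 k = (Poly_Mapping.single 0 (1/k) * Poly_Mapping.single 0 k) * p"
    by (simp add: sc_def algebra_simps)
  also have "\<dots> = p" using k by (simp add: mult_single)
  finally show ?thesis .
qed

theorem proposition5p8:
  fixes M :: "nat \<Rightarrow> nat \<Rightarrow> int" and n :: nat and d :: int and I :: "poly3 set"
  assumes "homogeneous_matrix M n"
    and "well_ordered M n"
    and "matrix_degree M n = d"
    and "zero_dim_ideal I"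
    and "dHB I (\<lambda>i j. M (i + 1) j) (n - 1) n"
  shows "hilb I (d - 1) = scheme_degree I"
proof -
  have Z: "zero_dim_ideal I" by fact
  from Z obtain e t1 where e: "\<forall>t\<ge>t1. hilb I t = e" and I: "is_ideal I" and notU: "I \<noteq> UNIV"
    by (auto simp: zero_dim_ideal_def homogeneous_ideal_def)
  have sd: "scheme_degree I = e"
    unfolding scheme_degree_def
  proof (rule the_equality)
    show "\<exists>t0. \<forall>t\<ge>t0. hilb I t = e" using e by blast
    fix e' assume "\<exists>t0. \<forall>t\<ge>t0. hilb I t = e'"
    then obtain t0 where "\<forall>t\<ge>t0. hilb I t = e'" by blast
    then show "e' = e" using e by (metis max.cobounded1 max.cobounded2)
  qed
  from assms(5) obtain a b f g where
    bm: "\<forall>i j. i \<le> j \<longrightarrow> j < n - 1 \<longrightarrow> b j \<le> b i" and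
    am: "\<forall>i j. i \<le> j \<longrightarrow> j < n \<longrightarrow> a j \<le> a i" and
    N: "\<forall>i<n - 1. \<forall>j<n. M (i + 1) j = b i - a j" and
    gh: "\<forall>j<n. hom (g j) (a j)" and
    fh: "\<forall>i<n - 1. \<forall>j<n. hom (f i j) (b i - a j)" and
    Ieq: "I = {(\<Sum>j<n. h j * g j) | h. True}" and
    ex: "\<forall>h. (\<Sum>j<n. h j * g j) = 0 \<longrightarrow> (\<exists>u. \<forall>j<n. h j = (\<Sum>i<n - 1. u i * f i j))" and
    fi: "\<forall>u. (\<forall>j<n. (\<Sum>i<n - 1. u i * f i j) = 0) \<longrightarrow> (\<forall>i<n - 1. u i = 0)"
    unfolding dHB_def by blast
  show ?thesis
  proof (cases "n = 0")
    case True
    have "I \<subseteq> {h * 0 | h. True}" using Ieq True by auto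
    then show ?thesis using principal_contra[OF Z _ hom_0[of 0]] by blast
  next
    case False
    interpret R: resol I "n - 1" n a b f g
      by unfold_locales (use False gh fh Ieq ex fi in auto)
    have amono: "\<forall>j<n. a j \<le> a 0" using am by auto
    have bmono: "\<forall>i<n - 1. b i \<le> b 0" using bm by auto
    show ?thesis
    proof (cases "a 0 \<le> 0")
      case True
      show ?thesis
      proof (cases "\<exists>j<n. g j \<noteq> 0")
        case True
        then obtain j where j: "j < n" "g j \<noteq> 0" by blast
        have "a j \<le> 0" using amono j \<open>a 0 \<le> 0\<close> by force
        moreover have "\<not> a j < 0" using hom_neg gh j by blast
        ultimately have "a j = 0" by simp
        then have "hom (g j) 0" using gh j by metis
        then have gj: "g j = Poly_Mapping.single 0 (Poly_Mapping.lookup (g j) 0)" by (rule hom0_const)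
        define k where "k = Poly_Mapping.lookup (g j) 0"
        have k: "k \<noteq> 0" unfolding k_def using gj j(2) by (metis single_zero)
        have "UNIV \<subseteq> I"
        proof
          fix p :: poly3
          define h where "h l = (if l = j then sc (1/k) p else 0)" for l
          have "(\<Sum>l<n. h l * g l) = h j * g j"
            unfolding h_def using sum_delta_l[OF j(1), of "sc (1/k) p" g] by simp
          also have "\<dots> = p" using gj unit_const[OF k] by (simp add: h_def k_def)
          finally show "p \<in> I" using Ieq by auto
        qed
        then show ?thesis using notU by blast
      next
        case False
        then have "I \<subseteq> {h * 0 | h. True}" using Ieq by auto
        then show ?thesis using principal_contra[OF Z _ hom_0[of 0]] by blast
      qed
    next
      case a0: False
      show ?thesis
      proof (cases "n = 1")
        case True
        have "I \<subseteq> {h * g 0 | h. True}" using Ieq True by auto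
        then show ?thesis using principal_contra[OF Z _ _] gh False a0 by force
      next
        case n1: False
        then have n2: "n \<ge> 2" using False by simp
        show ?thesis
        proof (cases "b 0 < a 0")
          case True
          have f0: "f i 0 = 0" if "i < n - 1" for i
            using hom_neg[of "f i 0" "b i - a 0"] fh bmono that True n2 by force
          have gz: "g j = 0" if j: "1 \<le> j" "j < n" for j
          proof -
            define h where "h k = (if k = 0 then g j else if k = j then - g 0 else 0)" for k
            have "(\<Sum>k<n. h k * g k) = (\<Sum>k<n. (if k = 0 then g j * g k else 0)) + (\<Sum>k<n. (if k = j then - g 0 * g k else 0))"
              using j by (subst sum.distrib[symmetric]) (rule sum.cong, auto simp: h_def)
            also have "\<dots> = 0" using j by (simp add: sum.delta' mult.commute)
            finally obtain u where "\<forall>k<n. h k = (\<Sum>i<n - 1. u i * f i k)" using ex by blast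
            then have "h 0 = (\<Sum>i<n - 1. u i * f i 0)" using j by auto
            also have "\<dots> = 0" using f0 by simp
            finally show ?thesis using j by (simp add: h_def)
          qed
          have "I \<subseteq> {h * g 0 | h. True}"
          proof
            fix p assume "p \<in> I"
            then obtain h where "p = (\<Sum>j<n. h j * g j)" using Ieq by blast
            also have "\<dots> = (\<Sum>j<n. if j = 0 then h 0 * g 0 else 0)"
              by (rule sum.cong) (auto simp: gz)
            also have "\<dots> = h 0 * g 0" using n2 by (simp add: sum.delta')
            finally show "p \<in> {h * g 0 | h. True}" by blast
          qed
          then show ?thesis using principal_contra[OF Z _ _] gh False a0 by force
        next
          case ab: False
          define SA where "SA = (\<Sum>j<n. a j)"
          define SB where "SB = (\<Sum>i<n - 1. b i)"
          define E where "E = (\<Sum>i<n - 1. (b i)^2) - (\<Sum>j<n. (a j)^2)"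
          have form: "2 * int (hilb I t) = (2*t+3) * (SA - SB) + E"
            if "t \<ge> 0" "b 0 \<le> t + 2" for t
          proof -
            have "\<forall>j<n. a j \<le> t + 2" using amono ab that by force
            moreover have "\<forall>i<n - 1. b i \<le> t + 2" using bmono that by force
            ultimately show ?thesis using R.hilb_formula[OF I that(1)] by (simp add: SA_def SB_def E_def)
          qed
          define T0 where "T0 = max t1 (max (b 0) 0)"
          have T0: "T0 \<ge> t1" "T0 \<ge> 0" "b 0 \<le> T0 + 2" by (auto simp: T0_def)
          have "2 * int e = (2*T0+3) * (SA - SB) + E" using form[of T0] T0 e by simp
          moreover have "2 * int e = (2*(T0+1)+3) * (SA - SB) + E" using form[of "T0+1"] T0 e by simp
          ultimately have D0: "SA = SB" by (simp add: algebra_simps)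
          have nS: "n = Suc (n - 1)" using False by simp
          have dsum: "d = M 0 0 + (\<Sum>i<n - 1. M (Suc i) (Suc i))"
            using assms(3) unfolding matrix_degree_def by (subst (asm) nS, subst (asm) sum.lessThan_Suc_shift) simp
          have "(\<Sum>i<n - 1. M (Suc i) (Suc i)) = (\<Sum>i<n - 1. b i - a (Suc i))"
            using N by (intro sum.cong refl) auto
          also have "\<dots> = SB - (\<Sum>i<n - 1. a (Suc i))" by (simp add: SB_def sum_subtractf)
          finally have ds: "d = M 0 0 + SB - (\<Sum>i<n - 1. a (Suc i))" using dsum by simp
          have SAs: "SA = a 0 + (\<Sum>i<n - 1. a (Suc i))"
            unfolding SA_def by (subst nS, subst sum.lessThan_Suc_shift) simp
          have "M 1 0 = b 0 - a 0" using N n2 by force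
          moreover have "M 1 0 \<le> M 0 0" using assms(2) n2 unfolding well_ordered_def
            by (metis One_nat_def less_2_cases_iff less_le_trans numeral_2_eq_2 zero_less_one)
          ultimately have "d \<ge> b 0" using ds SAs D0 by simp
          then have "2 * int (hilb I (d - 1)) = (2*(d-1)+3) * (SA - SB) + E"
            using form[of "d - 1"] ab a0 by simp
          then have "2 * int (hilb I (d - 1)) = 2 * int e" using D0 T0 form[of T0] e by simp
          then show ?thesis using sd by simp
        qed
      qed
    qed
  qed
qed

end
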